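(* Let $X$ be a random variable taking values in $\mathbb{R}^n$ with a density $f$ with respect to Lebesgue measure, let $\varphi:\mathbb{R}^n\to\mathbb{R}$ be measurable, and let $a,b>0$. Assume $\mathbb{E}\, e^{\alpha\varphi(X)}<\infty$ for all $\alpha\in(-a,b)$, and let $c:(-a,b)\to\mathbb{R}$ be a smooth function such that $\alpha\mapsto e^{-c(\alpha)}\,\mathbb{E}\, e^{\alpha\varphi(X)}$ is log-concave on $(-a,b)$. Set $\psi_c(\alpha)=c(\alpha)-c(0)-c'(0)\alpha$, let $\psi_{c,+}$ be the restriction of $\psi_c$ to $(0,b)$ and $\psi_{c,-}$ its restriction to $(-a,0)$. Then for every $t>0$, $$\mathbb{P}(\varphi(X)-\mathbb{E}\varphi(X)>t)\le e^{-\psi_{c,+}^*(t)},\qquad \mathbb{P}(\varphi(X)-\mathbb{E}\varphi(X)<-t)\le e^{-\psi_{c,-}^*(-t)},$$ where $\psi_{c,\pm}^*$ denote the Fenchel–Legendre duals.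
   Context: For a function $g$ defined on a subset $D\subseteq\mathbb{R}$ (extended by $+\infty$ outside $D$), its Fenchel–Legendre dual is $g^*(x)=\sup_{y\in D}(xy-g(y))$. A function $g:I\to(0,\infty)$ is log-concave if $\log g$ is concave. *)

theory Defs
  imports "HOL-Probability.Probability"
begin

definition smooth_on_real :: "real set \<Rightarrow> (real \<Rightarrow> real) \<Rightarrow> bool" where
  "smooth_on_real S g \<longleftrightarrow>
     (\<exists>D :: nat \<Rightarrow> real \<Rightarrow> real. (\<forall>x\<in>S. D 0 x = g x) \<and>
        (\<forall>k. \<forall>x\<in>S. (D k has_real_derivative D (Suc k) x) (at x)))"

definition log_concave_on :: "real set \<Rightarrow> (real \<Rightarrow> real) \<Rightarrow> bool" where
  "log_concave_on I g \<longleftrightarrow> (\<forall>x\<in>I. g x > 0) \<and> concave_on I (\<lambda>x. ln (g x))"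

text \<open>Fenchel--Legendre dual of g restricted to D (g extended by +infinity outside D).\<close>
definition fenchel_dual :: "real set \<Rightarrow> (real \<Rightarrow> real) \<Rightarrow> real \<Rightarrow> ereal" where
  "fenchel_dual D g x = (SUP y\<in>D. ereal (x * y - g y))"

definition exp_neg_ereal :: "ereal \<Rightarrow> ereal" where
  "exp_neg_ereal e = (case e of ereal r \<Rightarrow> ereal (exp (- r)) | PInfty \<Rightarrow> 0 | MInfty \<Rightarrow> \<infinity>)"

end

theory Submission imports Defs begin

lemma tail_upper:
  fixes M :: "'w measure" and Y :: "'w \<Rightarrow> real"
  assumes P: "prob_space M" and Ym: "Y \<in> borel_measurable M" and al: "\<alpha> > 0"
    and int: "integrable M (\<lambda>\<omega>. exp (\<alpha> * Y \<omega>))"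
  shows "measure M {\<omega>\<in>space M. Y \<omega> > s} \<le> exp (- \<alpha> * s) * (\<integral>\<omega>. exp (\<alpha> * Y \<omega>) \<partial>M)"
proof -
  interpret prob_space M by fact
  let ?A = "{\<omega>\<in>space M. Y \<omega> > s}"
  have A: "?A \<in> sets M" using Ym by measurable
  have "measure M ?A = (\<integral>\<omega>. indicator ?A \<omega> \<partial>M)" using A by (simp add: integrable_indicator_iff)
  also have "\<dots> \<le> (\<integral>\<omega>. exp (- \<alpha> * s) * exp (\<alpha> * Y \<omega>) \<partial>M)"
  proof (rule integral_mono)
    show "integrable M (indicator ?A :: 'w \<Rightarrow> real)" proof -
      have "emeasure M ?A < \<top>" using emeasure_finite[of ?A] top.not_eq_extremum by blast
      then show ?thesis using A by (simp add: integrable_indicator_iff)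
    qed
    show "integrable M (\<lambda>\<omega>. exp (- \<alpha> * s) * exp (\<alpha> * Y \<omega>))" using int by simp
    fix \<omega> assume "\<omega> \<in> space M"
    show "indicator ?A \<omega> \<le> exp (- \<alpha> * s) * exp (\<alpha> * Y \<omega>)"
    proof (cases "\<omega> \<in> ?A")
      case True
      then have "\<alpha> * (Y \<omega> - s) \<ge> 0" using al by auto
      then have "1 \<le> exp (\<alpha> * (Y \<omega> - s))" by simp
      also have "\<dots> = exp (- \<alpha> * s) * exp (\<alpha> * Y \<omega>)" by (simp add: exp_add[symmetric] algebra_simps)
      finally show ?thesis using True by simp
    qed simp
  qed
  also have "\<dots> = exp (- \<alpha> * s) * (\<integral>\<omega>. exp (\<alpha> * Y \<omega>) \<partial>M)" by simp
  finally show ?thesis .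
qed

lemma tail_lower:
  fixes M :: "'w measure" and Y :: "'w \<Rightarrow> real"
  assumes P: "prob_space M" and Ym: "Y \<in> borel_measurable M" and al: "\<alpha> < 0"
    and int: "integrable M (\<lambda>\<omega>. exp (\<alpha> * Y \<omega>))"
  shows "measure M {\<omega>\<in>space M. Y \<omega> < s} \<le> exp (- \<alpha> * s) * (\<integral>\<omega>. exp (\<alpha> * Y \<omega>) \<partial>M)"
proof -
  interpret prob_space M by fact
  let ?A = "{\<omega>\<in>space M. Y \<omega> < s}"
  have A: "?A \<in> sets M" using Ym by measurable
  have "measure M ?A = (\<integral>\<omega>. indicator ?A \<omega> \<partial>M)" using A by (simp add: integrable_indicator_iff)
  also have "\<dots> \<le> (\<integral>\<omega>. exp (- \<alpha> * s) * exp (\<alpha> * Y \<omega>) \<partial>M)"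
  proof (rule integral_mono)
    show "integrable M (indicator ?A :: 'w \<Rightarrow> real)" proof -
      have "emeasure M ?A < \<top>" using emeasure_finite[of ?A] top.not_eq_extremum by blast
      then show ?thesis using A by (simp add: integrable_indicator_iff)
    qed
    show "integrable M (\<lambda>\<omega>. exp (- \<alpha> * s) * exp (\<alpha> * Y \<omega>))" using int by simp
    fix \<omega> assume "\<omega> \<in> space M"
    show "indicator ?A \<omega> \<le> exp (- \<alpha> * s) * exp (\<alpha> * Y \<omega>)"
    proof (cases "\<omega> \<in> ?A")
      case True
      then have "\<alpha> * (Y \<omega> - s) \<ge> 0" using al by (auto intro: mult_nonpos_nonpos)
      then have "1 \<le> exp (\<alpha> * (Y \<omega> - s))" by simp
      also have "\<dots> = exp (- \<alpha> * s) * exp (\<alpha> * Y \<omega>)" by (simp add: exp_add[symmetric] algebra_simps)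
      finally show ?thesis using True by simp
    qed simp
  qed
  also have "\<dots> = exp (- \<alpha> * s) * (\<integral>\<omega>. exp (\<alpha> * Y \<omega>) \<partial>M)" by simp
  finally show ?thesis .
qed

lemma dual_bound:
  fixes D :: "real set" and g :: "real \<Rightarrow> real"
  assumes ne: "D \<noteq> {}" and p0: "p \<ge> 0" and H: "\<And>y. y \<in> D \<Longrightarrow> p \<le> exp (- (x * y - g y))"
  shows "ereal p \<le> exp_neg_ereal (fenchel_dual D g x)"
proof (cases "p = 0")
  case True
  then show ?thesis by (cases "fenchel_dual D g x") (auto simp: exp_neg_ereal_def)
next
  case False
  then have pp: "p > 0" using p0 by simp
  have "fenchel_dual D g x \<le> ereal (- ln p)"
    unfolding fenchel_dual_def
  proof (rule SUP_least)
    fix y assume "y \<in> D"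
    from H[OF this] have "ln p \<le> ln (exp (- (x * y - g y)))" using pp by (subst ln_le_cancel_iff) auto
    then have "ln p \<le> - (x * y - g y)" by simp  
    then show "ereal (x * y - g y) \<le> ereal (- ln p)" by simp
  qed
  moreover obtain y where y: "y \<in> D" using ne by blast
  then have "ereal (x * y - g y) \<le> fenchel_dual D g x"
    unfolding fenchel_dual_def by (rule SUP_upper)
  ultimately obtain r where r: "fenchel_dual D g x = ereal r" "r \<le> - ln p"
    by (cases "fenchel_dual D g x") auto
  then have "ln p \<le> - r" by simp
  then have "exp (ln p) \<le> exp (- r)" by (simp only: exp_le_cancel_iff)
  then have "p \<le> exp (- r)" using pp by simp
  then show ?thesis using r by (simp add: exp_neg_ereal_def)
qed

lemma slope_bound:
  fixes h c :: "real \<Rightarrow> real"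
  assumes conc: "concave_on {-a<..<b} h" and a: "a > 0" and b: "b > 0"
    and low: "\<And>\<alpha>. \<alpha> \<in> {-a<..<b} \<Longrightarrow> h \<alpha> - h 0 \<ge> m * \<alpha> - (c \<alpha> - c 0)"
    and der: "(c has_real_derivative d) (at 0)"
    and beta: "\<beta> \<in> {-a<..<b}"
  shows "h \<beta> - h 0 \<le> \<beta> * (m - d)"
proof -
  have key: "(- x) * (h y - h 0) \<le> y * (h 0 - h x)" if x: "x \<in> {-a<..<0}" and y: "y \<in> {0<..<b}" for x y
  proof -
    define t where "t = - x / (y - x)"
    have t0: "t \<ge> 0" "t \<le> 1" using x y by (auto simp: t_def field_simps)
    have xy: "x \<in> {-a<..<b}" "y \<in> {-a<..<b}" using x y by auto
    have "(1 - t) *\<^sub>R x + t *\<^sub>R y = 0" using x y by (simp add: t_def field_simps)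
    then have "h 0 \<ge> (1 - t) * h x + t * h y"
      using concave_onD[OF conc t0 xy] by simp
    then have "(y - x) * h 0 \<ge> (y - x) * ((1 - t) * h x + t * h y)"
      using x y by (intro mult_left_mono) auto
    also have "(y - x) * ((1 - t) * h x + t * h y) = ((y - x) * (1 - t)) * h x + ((y - x) * t) * h y"
      by (simp add: algebra_simps)
    also have "(y - x) * (1 - t) = y" "(y - x) * t = - x" using x y by (auto simp: t_def field_simps)
    then have "((y - x) * (1 - t)) * h x + ((y - x) * t) * h y = y * h x - x * h y" by simp
    finally show ?thesis by (simp add: algebra_simps)
  qed
  define q where "q = (\<lambda>\<alpha>. \<beta> * (m - (c \<alpha> - c 0) / (\<alpha> - 0)))"
  have "((\<lambda>\<alpha>. (c \<alpha> - c 0) / (\<alpha> - 0)) \<longlongrightarrow> d) (at 0)"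
    using der by (simp add: has_field_derivative_iff)
  then have qlim: "(q \<longlongrightarrow> \<beta> * (m - d)) (at 0)"
    unfolding q_def by (intro tendsto_intros)
  show ?thesis
  proof (cases "\<beta> = 0")
    case True then show ?thesis by simp
  next
    case False
    show ?thesis
    proof (cases "\<beta> > 0")
      case True
      have "(q \<longlongrightarrow> \<beta> * (m - d)) (at_left 0)"
        using qlim by (simp add: filterlim_at_split)
      moreover have "eventually (\<lambda>\<alpha>. h \<beta> - h 0 \<le> q \<alpha>) (at_left 0)"
      proof (rule eventually_at_leftI[of "-a"])
        fix x assume x: "x \<in> {-a<..<(0::real)}"
        have y: "\<beta> \<in> {0<..<b}" using True beta by auto
        have "(- x) * (h \<beta> - h 0) \<le> \<beta> * (h 0 - h x)" using key[OF x y] .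
        also have "\<dots> \<le> \<beta> * (-(m * x - (c x - c 0)))"
          using low[of x] x True b by (intro mult_left_mono) auto
        also have "\<beta> * (-(m * x - (c x - c 0))) = (-x) * q x"
          using x by (simp add: q_def field_simps)
        finally have "(- x) * (h \<beta> - h 0) \<le> (-x) * q x" .
        then show "h \<beta> - h 0 \<le> q x" using x by (simp add: mult_le_cancel_left)
      qed (use a in auto)
      ultimately show ?thesis
        by (intro tendsto_le[of "at_left 0" q _ "\<lambda>_. h \<beta> - h 0"]) auto
    next
      case neg: False
      with False have bn: "\<beta> < 0" by simp
      have "(q \<longlongrightarrow> \<beta> * (m - d)) (at_right 0)"
        using qlim by (simp add: filterlim_at_split)
      moreover have "eventually (\<lambda>\<alpha>. h \<beta> - h 0 \<le> q \<alpha>) (at_right 0)"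
      proof (rule eventually_at_rightI[of _ b])
        fix y assume y: "y \<in> {(0::real)<..<b}"
        have x: "\<beta> \<in> {-a<..<0}" using bn beta by auto
        have "(-\<beta>) * (m * y - (c y - c 0)) \<le> (- \<beta>) * (h y - h 0)"
          using low[of y] y bn a by (intro mult_left_mono) auto
        also have "\<dots> \<le> y * (h 0 - h \<beta>)" using key[OF x y] .
        finally have "y * (h \<beta> - h 0) \<le> \<beta> * (m * y - (c y - c 0))"
          by (simp add: algebra_simps)
        also have "\<beta> * (m * y - (c y - c 0)) = y * q y"
          using y by (simp add: q_def field_simps)
        finally have "y * (h \<beta> - h 0) \<le> y * q y" .
        then show "h \<beta> - h 0 \<le> q y" using y by (simp add: mult_le_cancel_left)
      qed (use b in auto)
      ultimately show ?thesis
        by (intro tendsto_le[of "at_right 0" q _ "\<lambda>_. h \<beta> - h 0"]) auto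
    qed
  qed
qed

theorem corollary2p5:
  fixes M :: "'w measure" and X :: "'w \<Rightarrow> real ^ 'n"
    and f :: "real ^ 'n \<Rightarrow> ennreal" and \<phi> :: "real ^ 'n \<Rightarrow> real"
    and a b :: real and c :: "real \<Rightarrow> real"
  assumes "prob_space M"
    and "distributed M lborel X f"
    and "\<phi> \<in> borel_measurable borel"
    and "a > 0" and "b > 0"
    and "\<forall>\<alpha>\<in>{-a<..<b}. integrable M (\<lambda>\<omega>. exp (\<alpha> * \<phi> (X \<omega>)))"
    and "smooth_on_real {-a<..<b} c"
    and "log_concave_on {-a<..<b}
           (\<lambda>\<alpha>. exp (- c \<alpha>) * (\<integral>\<omega>. exp (\<alpha> * \<phi> (X \<omega>)) \<partial>M))"
  defines "\<psi> \<equiv> (\<lambda>\<alpha>. c \<alpha> - c 0 - deriv c 0 * \<alpha>)"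
  shows "\<forall>t>0.
     ereal (measure M {\<omega>\<in>space M. \<phi> (X \<omega>) - (\<integral>\<omega>'. \<phi> (X \<omega>') \<partial>M) > t})
        \<le> exp_neg_ereal (fenchel_dual {0<..<b} \<psi> t)
   \<and> ereal (measure M {\<omega>\<in>space M. \<phi> (X \<omega>) - (\<integral>\<omega>'. \<phi> (X \<omega>') \<partial>M) < - t})
        \<le> exp_neg_ereal (fenchel_dual {-a<..<0} \<psi> (- t))"
  proof -
  interpret prob_space M by fact
  define Y where "Y = (\<lambda>\<omega>. \<phi> (X \<omega>))"
  define L where "L = (\<lambda>\<alpha>. \<integral>\<omega>. exp (\<alpha> * Y \<omega>) \<partial>M)"
  define m where "m = (\<integral>\<omega>. Y \<omega> \<partial>M)"
  have Xm: "X \<in> measurable M lborel" using distributed_measurable[OF assms(2)] .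
  have phim: "\<phi> \<in> borel_measurable lborel" using assms(3) by simp
  have Ym: "Y \<in> borel_measurable M" unfolding Y_def using measurable_compose[OF Xm phim] by (simp add: comp_def)
  have intexp: "integrable M (\<lambda>\<omega>. exp (\<alpha> * Y \<omega>))" if "\<alpha> \<in> {-a<..<b}" for \<alpha>
    unfolding Y_def using assms(6) that by (rule bspec)
  define \<epsilon> where "\<epsilon> = min a b / 2"
  have eps: "\<epsilon> > 0" "\<epsilon> \<in> {-a<..<b}" "-\<epsilon> \<in> {-a<..<b}" using assms(4,5) by (auto simp: \<epsilon>_def)
  have intY: "integrable M Y"
  proof (rule Bochner_Integration.integrable_bound[of M "\<lambda>\<omega>. (exp (\<epsilon> * Y \<omega>) + exp ((-\<epsilon>) * Y \<omega>)) / \<epsilon>"])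
    show "integrable M (\<lambda>\<omega>. (exp (\<epsilon> * Y \<omega>) + exp ((-\<epsilon>) * Y \<omega>)) / \<epsilon>)"
      using intexp[OF eps(2)] intexp[OF eps(3)] by simp
    show "Y \<in> borel_measurable M" by fact
    show "AE x in M. norm (Y x) \<le> norm ((exp (\<epsilon> * Y x) + exp ((-\<epsilon>) * Y x)) / \<epsilon>)"
    proof (rule AE_I2)
      fix x
      have e1: "\<epsilon> * \<bar>Y x\<bar> \<le> exp (\<epsilon> * \<bar>Y x\<bar>)" using exp_ge_add_one_self[of "\<epsilon> * \<bar>Y x\<bar>"] by linarith
      have p1: "exp (\<epsilon> * Y x) > 0" "exp ((-\<epsilon>) * Y x) > 0" by simp_all
      have "exp (\<epsilon> * \<bar>Y x\<bar>) = exp (\<epsilon> * Y x) \<or> exp (\<epsilon> * \<bar>Y x\<bar>) = exp ((-\<epsilon>) * Y x)"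
        by (cases "Y x \<ge> 0") simp_all
      then have e2: "exp (\<epsilon> * \<bar>Y x\<bar>) \<le> exp (\<epsilon> * Y x) + exp ((-\<epsilon>) * Y x)"
        using p1 by linarith
      have "\<epsilon> * \<bar>Y x\<bar> \<le> exp (\<epsilon> * Y x) + exp ((-\<epsilon>) * Y x)"
        using e1 e2 by linarith
      then have "\<bar>Y x\<bar> * \<epsilon> \<le> exp (\<epsilon> * Y x) + exp ((-\<epsilon>) * Y x)"
        by (simp only: mult.commute)
      then have "\<bar>Y x\<bar> \<le> (exp (\<epsilon> * Y x) + exp ((-\<epsilon>) * Y x)) / \<epsilon>"
        by (simp only: pos_le_divide_eq[OF eps(1)])
      moreover have "(exp (\<epsilon> * Y x) + exp ((-\<epsilon>) * Y x)) / \<epsilon> > 0"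
        using p1 eps(1) by (intro divide_pos_pos add_pos_pos)
      ultimately show "norm (Y x) \<le> norm ((exp (\<epsilon> * Y x) + exp ((-\<epsilon>) * Y x)) / \<epsilon>)"
        using eps(1) by simp
    qed
  qed
  have jensen: "L \<alpha> \<ge> exp (\<alpha> * m)" if "\<alpha> \<in> {-a<..<b}" for \<alpha>
  proof -
    define C1 where "C1 = exp (\<alpha> * m) * (1 - \<alpha> * m)"
    define C2 where "C2 = exp (\<alpha> * m) * \<alpha>"
    have "(\<integral>\<omega>. C1 + C2 * Y \<omega> \<partial>M) = C1 + C2 * m"
      using intY by (simp add: m_def prob_space)
    also have "C1 + C2 * m = exp (\<alpha> * m)" by (simp add: C1_def C2_def algebra_simps)
    finally have eq: "(\<integral>\<omega>. C1 + C2 * Y \<omega> \<partial>M) = exp (\<alpha> * m)" .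
    have "(\<integral>\<omega>. C1 + C2 * Y \<omega> \<partial>M) \<le> L \<alpha>"
      unfolding L_def
    proof (rule integral_mono)
      show "integrable M (\<lambda>\<omega>. C1 + C2 * Y \<omega>)" using intY by simp
      show "integrable M (\<lambda>\<omega>. exp (\<alpha> * Y \<omega>))" by (rule intexp[OF that])
      fix \<omega>
      have "C1 + C2 * Y \<omega> = exp (\<alpha> * m) * (1 + \<alpha> * (Y \<omega> - m))"
        by (simp add: C1_def C2_def algebra_simps)
      also have "\<dots> \<le> exp (\<alpha> * m) * exp (\<alpha> * (Y \<omega> - m))"
        by (intro mult_left_mono) auto
      also have "\<dots> = exp (\<alpha> * Y \<omega>)" by (simp add: exp_add[symmetric] algebra_simps)
      finally show "C1 + C2 * Y \<omega> \<le> exp (\<alpha> * Y \<omega>)" .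
    qed
    then show ?thesis using eq by simp
  qed
  have Lpos: "L \<alpha> > 0" if "\<alpha> \<in> {-a<..<b}" for \<alpha>
    using jensen[OF that] by (rule less_le_trans[OF exp_gt_zero])
  define h where "h = (\<lambda>\<alpha>. ln (exp (- c \<alpha>) * L \<alpha>))"
  have conc: "concave_on {-a<..<b} h"
    using assms(8) unfolding log_concave_on_def h_def L_def Y_def by simp
  have hval: "h \<alpha> = - c \<alpha> + ln (L \<alpha>)" if "\<alpha> \<in> {-a<..<b}" for \<alpha>
    using Lpos[OF that] by (simp add: h_def ln_mult)
  have zero: "(0::real) \<in> {-a<..<b}" using assms(4,5) by simp
  have L0: "L 0 = 1" by (simp add: L_def prob_space)
  have h0: "h 0 = - c 0" using hval[OF zero] L0 by simp
  have low: "h \<alpha> - h 0 \<ge> m * \<alpha> - (c \<alpha> - c 0)" if "\<alpha> \<in> {-a<..<b}" for \<alpha>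
  proof -
    have "ln (exp (\<alpha> * m)) \<le> ln (L \<alpha>)" using jensen[OF that] Lpos[OF that] by (subst ln_le_cancel_iff) auto
    then have "\<alpha> * m \<le> ln (L \<alpha>)" by simp
    then show ?thesis using hval[OF that] h0 by (simp add: algebra_simps)
  qed
  obtain D where D: "\<forall>x\<in>{-a<..<b}. D 0 x = c x" "\<forall>k. \<forall>x\<in>{-a<..<b}. (D k has_real_derivative D (Suc k) x) (at x)"
    using assms(7) unfolding smooth_on_real_def by blast
  have der: "(c has_real_derivative D 1 0) (at 0)"
    using has_field_derivative_transform_within_open[OF D(2)[rule_format, OF zero, of 0] _ zero, of c] D(1)
    by simp
  have dc: "deriv c 0 = D 1 0" using DERIV_imp_deriv[OF der] .
  have Lbound: "L \<beta> \<le> exp (\<psi> \<beta> + \<beta> * m)" if "\<beta> \<in> {-a<..<b}" for \<beta>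
  proof -
    have "h \<beta> - h 0 \<le> \<beta> * (m - D 1 0)"
      by (rule slope_bound[OF conc assms(4,5) low der that]) auto
    then have "ln (L \<beta>) \<le> \<psi> \<beta> + \<beta> * m"
      using hval[OF that] h0 dc unfolding assms(9) by (simp add: algebra_simps)
    then have "exp (ln (L \<beta>)) \<le> exp (\<psi> \<beta> + \<beta> * m)" by (simp only: exp_le_cancel_iff)
    then show ?thesis using Lpos[OF that] by simp
  qed
  have mm: "(\<integral>\<omega>'. \<phi> (X \<omega>') \<partial>M) = m" by (simp add: m_def Y_def)
  show ?thesis
  proof (intro allI impI conjI)
    fix t :: real assume t: "t > 0"
    have set1: "{\<omega>\<in>space M. \<phi> (X \<omega>) - (\<integral>\<omega>'. \<phi> (X \<omega>') \<partial>M) > t} = {\<omega>\<in>space M. Y \<omega> > m + t}"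
      unfolding mm by (auto simp: Y_def)
    show "ereal (measure M {\<omega>\<in>space M. \<phi> (X \<omega>) - (\<integral>\<omega>'. \<phi> (X \<omega>') \<partial>M) > t})
        \<le> exp_neg_ereal (fenchel_dual {0<..<b} \<psi> t)"
      unfolding set1
    proof (rule dual_bound)
      show "{0<..<b} \<noteq> {}" using assms(5) by simp
      show "0 \<le> measure M {\<omega>\<in>space M. Y \<omega> > m + t}" by simp
      fix y assume y: "y \<in> {0<..<b}"
      then have yI: "y \<in> {-a<..<b}" using assms(4) by auto
      have "measure M {\<omega>\<in>space M. Y \<omega> > m + t} \<le> exp (- y * (m + t)) * L y"
        unfolding L_def using tail_upper[OF assms(1) Ym _ intexp[OF yI]] y by simp
      also have "\<dots> \<le> exp (- y * (m + t)) * exp (\<psi> y + y * m)"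
        using Lbound[OF yI] by (intro mult_left_mono) auto
      also have "\<dots> = exp (- (t * y - \<psi> y))" by (simp add: exp_add[symmetric] algebra_simps)
      finally show "measure M {\<omega>\<in>space M. Y \<omega> > m + t} \<le> exp (- (t * y - \<psi> y))" .
    qed
    have set2: "{\<omega>\<in>space M. \<phi> (X \<omega>) - (\<integral>\<omega>'. \<phi> (X \<omega>') \<partial>M) < - t} = {\<omega>\<in>space M. Y \<omega> < m - t}"
      unfolding mm by (auto simp: Y_def)
    show "ereal (measure M {\<omega>\<in>space M. \<phi> (X \<omega>) - (\<integral>\<omega>'. \<phi> (X \<omega>') \<partial>M) < - t})
        \<le> exp_neg_ereal (fenchel_dual {-a<..<0} \<psi> (- t))"
      unfolding set2
    proof (rule dual_bound)
      show "{-a<..<0} \<noteq> {}" using assms(4) by simp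
      show "0 \<le> measure M {\<omega>\<in>space M. Y \<omega> < m - t}" by simp
      fix y assume y: "y \<in> {-a<..<0}"
      then have yI: "y \<in> {-a<..<b}" using assms(5) by auto
      have "measure M {\<omega>\<in>space M. Y \<omega> < m - t} \<le> exp (- y * (m - t)) * L y"
        unfolding L_def using tail_lower[OF assms(1) Ym _ intexp[OF yI]] y by simp
      also have "\<dots> \<le> exp (- y * (m - t)) * exp (\<psi> y + y * m)"
        using Lbound[OF yI] by (intro mult_left_mono) auto
      also have "\<dots> = exp (- ((- t) * y - \<psi> y))" by (simp add: exp_add[symmetric] algebra_simps)
      finally show "measure M {\<omega>\<in>space M. Y \<omega> < m - t} \<le> exp (- ((- t) * y - \<psi> y))" .
    qed
  qed
qed

end
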